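(* Let $(X,E,\ell)$ be a uniformly connected and deterministic edge-labelled directed graph with label alphabet $\Sigma$, and let $F\subset\Sigma^+$ be a finite, non-empty set which is relatively dense in $(X,E,\ell)$. Then $$\sup_{x,y\in X}\mathsf h(L^F_{x,y})<\mathsf h(X).$$
   Context: $\Sigma$ is a finite alphabet, $\Sigma^*$ the set of finite words (including the empty word $\epsilon$), $\Sigma^+=\Sigma^*\setminus\{\epsilon\}$, $|w|$ the length of $w$. A factor of $a_1\cdots a_n$ is a word $a_i a_{i+1}\cdots a_j$, $1\le i\le j\le n$. For a language $L\subset\Sigma^*$, its entropy is $\mathsf h(L)=\limsup_{n\to\infty}\frac1n\log|\{w\in L:|w|=n\}|$, and for finite $F\subset\Sigma^+$, $L^F=\{w\in L:\text{no }v\in F\text{ is a factor of }w\}$. $(X,E,\ell)$ is a (possibly infinite) directed graph with vertex set $X$ whose edges $e=(x,a,y)$ have initial vertex $x$, terminal vertex $y$ and label $\ell(e)=a\in\Sigma$ (multiple edges and loops allowed, but two edges with the same endpoints have distinct labels). A path is a sequence of edges $e_1\cdots e_n$ with terminal vertex of $e_i$ equal to the initial vertex of $e_{i+1}$; its label is $\ell(e_1)\cdots\ell(e_n)$; the empty path at $x$ has label $\epsilon$. $L_{x,y}$ is the set of labels of all paths from $x$ to $y$, and $\mathsf h(X)=\sup_{x,y\in X}\mathsf h(L_{x,y})$. The graph is deterministic if for every vertex $x$ and $a\in\Sigma$ there is at most one edge with initial vertex $x$ and label $a$. It is strongly connected if there is a path between any ordered pair of vertices, and uniformly connected if it is strongly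 connected and there is $K$ such that for every edge from $x$ to $y$ there is a path from $y$ to $x$ of length at most $K$. The forward distance $d^+(x,y)$ is the minimal length of a path from $x$ to $y$. $F$ is relatively dense if there is $D$ such that for every $x\in X$ there are $y\in X$ and $w\in F$ with $d^+(x,y)\le D$ and a path starting at $y$ with label $w$. *)

theory Defs
  imports Complex_Main "HOL-Library.Extended_Real" "HOL-Library.Extended_Nat"
    "HOL-Library.Liminf_Limsup" "HOL-Library.Sublist"
begin

inductive lpath :: "('v \<times> 'a \<times> 'v) set \<Rightarrow> 'v \<Rightarrow> 'a list \<Rightarrow> 'v \<Rightarrow> bool"
  for E where
  lpath_nil: "lpath E x [] x"
| lpath_cons: "(x, a, z) \<in> E \<Longrightarrow> lpath E z w y \<Longrightarrow> lpath E x (a # w) y"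

definition lang :: "('v \<times> 'a \<times> 'v) set \<Rightarrow> 'v \<Rightarrow> 'v \<Rightarrow> 'a list set" where
  "lang E x y = {w. lpath E x w y}"

definition avoiding :: "'a list set \<Rightarrow> 'a list set \<Rightarrow> 'a list set" where
  "avoiding L F = {w \<in> L. \<forall>v\<in>F. \<not> sublist v w}"

definition count_len :: "'a list set \<Rightarrow> nat \<Rightarrow> nat" where
  "count_len L n = card {w \<in> L. length w = n}"

definition entropy :: "'a list set \<Rightarrow> ereal" where
  "entropy L = limsup (\<lambda>n. if count_len L n = 0 then -\<infinity>
                           else ereal (ln (real (count_len L n)) / real n))"

definition graph_entropy :: "'v set \<Rightarrow> ('v \<times> 'a \<times> 'v) set \<Rightarrow> ereal" where
  "graph_entropy X E = (SUP p \<in> X \<times> X. entropy (lang E (fst p) (snd p)))"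

definition deterministic :: "('v \<times> 'a \<times> 'v) set \<Rightarrow> bool" where
  "deterministic E \<longleftrightarrow> (\<forall>x a y y'. (x, a, y) \<in> E \<longrightarrow> (x, a, y') \<in> E \<longrightarrow> y = y')"

definition strongly_connected :: "'v set \<Rightarrow> ('v \<times> 'a \<times> 'v) set \<Rightarrow> bool" where
  "strongly_connected X E \<longleftrightarrow> (\<forall>x\<in>X. \<forall>y\<in>X. \<exists>w. lpath E x w y)"

definition uniformly_connected :: "'v set \<Rightarrow> ('v \<times> 'a \<times> 'v) set \<Rightarrow> bool" where
  "uniformly_connected X E \<longleftrightarrow> strongly_connected X E \<and>
     (\<exists>K::nat. \<forall>x a y. (x, a, y) \<in> E \<longrightarrow> (\<exists>w. length w \<le> K \<and> lpath E y w x))"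

definition fwd_dist :: "('v \<times> 'a \<times> 'v) set \<Rightarrow> 'v \<Rightarrow> 'v \<Rightarrow> enat" where
  "fwd_dist E x y = (INF w \<in> {w. lpath E x w y}. enat (length w))"

definition relatively_dense :: "'v set \<Rightarrow> ('v \<times> 'a \<times> 'v) set \<Rightarrow> 'a list set \<Rightarrow> bool" where
  "relatively_dense X E F \<longleftrightarrow> (\<exists>D::nat. \<forall>x\<in>X. \<exists>y\<in>X. \<exists>w\<in>F.
      fwd_dist E x y \<le> enat D \<and> (\<exists>z. lpath E y w z))"

end

theory Submission
  imports Defs "HOL-Real_Asymp.Real_Asymp"
begin


lemma lpath_append: "lpath E x u z \<Longrightarrow> lpath E z v y \<Longrightarrow> lpath E x (u @ v) y"
  by (induction rule: lpath.induct) (auto intro: lpath.intros)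

lemma lpath_split: "lpath E x (u @ v) y \<Longrightarrow> \<exists>z. lpath E x u z \<and> lpath E z v y"
proof (induction u arbitrary: x)
  case Nil then show ?case by (auto intro: lpath.intros)
next
  case (Cons a u)
  from Cons.prems obtain z where "(x,a,z) \<in> E" "lpath E z (u@v) y"
    by (auto elim: lpath.cases)
  with Cons.IH obtain z' where "lpath E z u z'" "lpath E z' v y" by blast
  with \<open>(x,a,z) \<in> E\<close> show ?case by (auto intro: lpath.intros)
qed

lemma lpath_append_iff: "lpath E x (u @ v) y \<longleftrightarrow> (\<exists>z. lpath E x u z \<and> lpath E z v y)"
  using lpath_split lpath_append by metis

lemma lpath_det: "lpath E x w y \<Longrightarrow> deterministic E \<Longrightarrow> lpath E x w y' \<Longrightarrow> y = y'"
proof (induction arbitrary: y' rule: lpath.induct)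
  case (lpath_nil x) then show ?case by (auto elim: lpath.cases)
next
  case (lpath_cons x a z w y)
  from lpath_cons.prems(2) obtain z' where "(x,a,z') \<in> E" "lpath E z' w y'"
    by (auto elim: lpath.cases)
  with lpath_cons show ?case unfolding deterministic_def by metis
qed

lemma lpath_in_X: "lpath E x w y \<Longrightarrow> E \<subseteq> X \<times> S \<times> X \<Longrightarrow> x \<in> X \<Longrightarrow> y \<in> X"
  by (induction rule: lpath.induct) auto

lemma lpath_set: "lpath E x w y \<Longrightarrow> E \<subseteq> X \<times> S \<times> X \<Longrightarrow> set w \<subseteq> S"
  by (induction rule: lpath.induct) auto

lemma lpath_back:
  assumes K: "\<forall>x a y. (x, a, y) \<in> E \<longrightarrow> (\<exists>w. length w \<le> K \<and> lpath E y w x)"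
  shows "lpath E x w y \<Longrightarrow> \<exists>w'. lpath E y w' x \<and> length w' \<le> K * length w"
proof (induction rule: lpath.induct)
  case (lpath_nil x) then show ?case by (auto intro: lpath.intros)
next
  case (lpath_cons x a z w y)
  then obtain w' where w': "lpath E y w' z" "length w' \<le> K * length w" by auto
  from K lpath_cons.hyps(1) obtain q where q: "length q \<le> K" "lpath E z q x" by blast
  have "lpath E y (w' @ q) x" using lpath_append w'(1) q(2) by metis
  moreover have "length (w' @ q) \<le> K * length (a # w)" using w'(2) q(1) by simp
  ultimately show ?case by blast
qed

lemma fwd_dist_path: "fwd_dist E x y \<le> enat D \<Longrightarrow> \<exists>w. lpath E x w y \<and> length w \<le> D"
proof (rule ccontr)
  assume a: "fwd_dist E x y \<le> enat D" "\<not> (\<exists>w. lpath E x w y \<and> length w \<le> D)"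
  have "enat (Suc D) \<le> fwd_dist E x y"
    unfolding fwd_dist_def
  proof (rule INF_greatest)
    fix w assume "w \<in> {w. lpath E x w y}"
    with a(2) show "enat (Suc D) \<le> enat (length w)" by auto
  qed
  with a(1) show False
    by (metis Suc_n_not_le_n enat_ord_simps(1) order_trans)
qed

definition walk :: "('v \<times> 'a \<times> 'v) set \<Rightarrow> 'v \<Rightarrow> 'a list \<Rightarrow> 'v" where
  "walk E v w = (THE z. lpath E v w z)"

lemma walk_eq: "deterministic E \<Longrightarrow> lpath E v w z \<Longrightarrow> walk E v w = z"
  unfolding walk_def using lpath_det by (metis the_equality)



fun ins :: "('v \<times> 'a \<times> 'v) set \<Rightarrow> ('v \<Rightarrow> 'a list) \<Rightarrow> nat \<Rightarrow> nat \<Rightarrow> 'v \<Rightarrow> nat list \<Rightarrow> 'a list \<Rightarrow> 'a list" where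
  "ins E d T G v [] w = w"
| "ins E d T G v (j#js) w = take (j*T) w @ d (walk E v (take (j*T) w)) @ drop (j*T) (take G w)
      @ ins E d T G (walk E v (take G w)) js (drop G w)"

lemma ins_clash:
  assumes "j < j'" "j' < M" "G = M*T" "G \<le> length w" "G \<le> length w'" "length d1 \<le> T"
    "f \<in> F" "sublist f d1" "\<forall>f\<in>F. \<not> sublist f w'"
    "take (j*T) w @ d1 @ X = take (j'*T) w' @ Y"
  shows False
proof -
  have jT: "j*T + T \<le> j'*T" using assms(1)
    by (metis Suc_leI add.commute mult_Suc mult_le_mono1)
  have j'G: "j'*T \<le> G" using assms(2,3) by simp
  define Z where "Z = drop (j*T) (take (j'*T) w')"
  have split: "take (j'*T) w' = take (j*T) w' @ Z"
    unfolding Z_def using jT by (metis append_take_drop_id le_add1 min_def order_trans take_take)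
  have lZ: "length Z \<ge> T" unfolding Z_def using jT j'G assms(5) by simp
  have l1: "length (take (j*T) w) = length (take (j*T) w')" using jT j'G assms(4,5) by simp
  from assms(10) have "take (j*T) w @ (d1 @ X) = take (j*T) w' @ (Z @ Y)" using split by simp
  then have "d1 @ X = Z @ Y" using l1 by (simp add: append_eq_append_conv)
  then have "take (length d1) (d1 @ X) = take (length d1) (Z @ Y)" by simp
  then have "d1 = take (length d1) Z" using lZ assms(6) by simp
  then have "sublist d1 Z" by (metis sublist_take)
  moreover have "sublist Z w'" unfolding Z_def
    by (meson sublist_drop sublist_order.order.trans sublist_take)
  ultimately have "sublist f w'" using assms(8) by (meson sublist_order.order.trans)
  with assms(7,9) show False by blast
qed

lemma ins_inj:
  assumes dF: "\<forall>u. \<exists>f\<in>F. sublist f (d u)" and dlen: "\<forall>u. length (d u) \<le> T" and G: "G = M*T"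
  shows "ins E d T G v js w = ins E d T G v js' w' \<Longrightarrow> length js = length js' \<Longrightarrow>
    set js \<subseteq> {..<M} \<Longrightarrow> set js' \<subseteq> {..<M} \<Longrightarrow> G*length js \<le> length w \<Longrightarrow> G*length js' \<le> length w' \<Longrightarrow>
    \<forall>f\<in>F. \<not> sublist f w \<Longrightarrow> \<forall>f\<in>F. \<not> sublist f w' \<Longrightarrow> js = js' \<and> w = w'"
proof (induction js arbitrary: v js' w w')
  case Nil then show ?case by simp
next
  case (Cons j js)
  then obtain j' js'' where js': "js' = j' # js''" by (cases js') auto
  have lw: "G \<le> length w" "G \<le> length w'" using Cons.prems(5,6) js' by auto
  have jM: "j < M" "j' < M" using Cons.prems(3,4) js' by auto
  have eq: "take (j*T) w @ d (walk E v (take (j*T) w)) @ (drop (j*T) (take G w)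
      @ ins E d T G (walk E v (take G w)) js (drop G w)) =
    take (j'*T) w' @ (d (walk E v (take (j'*T) w')) @ drop (j'*T) (take G w')
      @ ins E d T G (walk E v (take G w')) js'' (drop G w'))"
    using Cons.prems(1) js' by simp
  have eq': "take (j'*T) w' @ d (walk E v (take (j'*T) w')) @ (drop (j'*T) (take G w')
      @ ins E d T G (walk E v (take G w')) js'' (drop G w')) =
    take (j*T) w @ (d (walk E v (take (j*T) w)) @ drop (j*T) (take G w)
      @ ins E d T G (walk E v (take G w)) js (drop G w))"
    using eq by simp
  have jj: "j = j'"
  proof (rule ccontr)
    assume "j \<noteq> j'"
    then consider "j < j'" | "j' < j" by linarith
    then show False
    proof cases
      case 1
      obtain f where "f \<in> F" "sublist f (d (walk E v (take (j*T) w)))" using dF by blast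
      then show False using ins_clash[OF 1 jM(2) G lw dlen[rule_format] _ _ Cons.prems(8) eq] by blast
    next
      case 2
      obtain f where "f \<in> F" "sublist f (d (walk E v (take (j'*T) w')))" using dF by blast
      then show False using ins_clash[OF 2 jM(1) G lw(2) lw(1) dlen[rule_format] _ _ Cons.prems(7) eq'] by blast
    qed
  qed
  have jG: "j*T \<le> G" using jM G by simp
  have t1: "take (j*T) w = take (j*T) w'"
  proof -
    have "length (take (j*T) w) = length (take (j*T) w')" using jG lw by simp
    then show ?thesis using eq jj by (simp add: append_eq_append_conv)
  qed
  have "d (walk E v (take (j*T) w)) @ (drop (j*T) (take G w)
      @ ins E d T G (walk E v (take G w)) js (drop G w)) =
    d (walk E v (take (j*T) w)) @ (drop (j*T) (take G w')
      @ ins E d T G (walk E v (take G w')) js'' (drop G w'))"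
    using eq jj t1 by simp
  then have e2: "drop (j*T) (take G w) @ ins E d T G (walk E v (take G w)) js (drop G w) =
      drop (j*T) (take G w') @ ins E d T G (walk E v (take G w')) js'' (drop G w')" by simp
  have "length (drop (j*T) (take G w)) = length (drop (j*T) (take G w'))" using lw by simp
  then have m: "drop (j*T) (take G w) = drop (j*T) (take G w')"
    and r: "ins E d T G (walk E v (take G w)) js (drop G w) = ins E d T G (walk E v (take G w')) js'' (drop G w')"
    using e2 by (auto simp add: append_eq_append_conv)
  have tG: "take G w = take G w'"
    by (metis append_take_drop_id jG m t1 take_take min_absorb1)
  have IH: "js = js'' \<and> drop G w = drop G w'"
    apply (rule Cons.IH[OF r[unfolded tG]])
    using Cons.prems js' by (auto simp: G dest: sublist_order.order.trans[OF _ sublist_drop])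
  show ?case using IH jj tG js' by (metis append_take_drop_id)
qed



lemma ins_length:
  assumes dlen: "\<forall>u. length (d u) \<le> T" and d1: "\<forall>u. 1 \<le> length (d u)" and G: "G = M*T"
  shows "set js \<subseteq> {..<M} \<Longrightarrow> G*length js \<le> length w \<Longrightarrow>
    length w + length js \<le> length (ins E d T G v js w) \<and> length (ins E d T G v js w) \<le> length w + T * length js"
proof (induction js arbitrary: v w)
  case Nil then show ?case by simp
next
  case (Cons j js)
  have jG: "j*T \<le> G" using Cons.prems G by simp
  have lw: "G \<le> length w" using Cons.prems by simp
  have IH: "length (drop G w) + length js \<le> length (ins E d T G (walk E v (take G w)) js (drop G w)) \<and>
     length (ins E d T G (walk E v (take G w)) js (drop G w)) \<le> length (drop G w) + T * length js"
    using Cons.prems by (intro Cons.IH) auto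
  have "length (take (j*T) w) + length (drop (j*T) (take G w)) = G" using jG lw by simp
  moreover have "length (drop G w) = length w - G" by simp
  moreover have "1 \<le> length (d (walk E v (take (j*T) w)))" "length (d (walk E v (take (j*T) w))) \<le> T"
    using d1 dlen by auto
  ultimately show ?case using IH lw
    by (simp only: ins.simps length_append length_Cons mult_Suc_right) linarith
qed

lemma ins_path:
  assumes det: "deterministic E" and EX: "E \<subseteq> X \<times> S \<times> X" and dp: "\<forall>u\<in>X. lpath E u (d u) u"
    and G: "G = M*T"
  shows "lpath E v w y \<Longrightarrow> v \<in> X \<Longrightarrow> set js \<subseteq> {..<M} \<Longrightarrow> G*length js \<le> length w \<Longrightarrow>
    lpath E v (ins E d T G v js w) y"
proof (induction js arbitrary: v w)
  case Nil then show ?case by simp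
next
  case (Cons j js)
  have jG: "j*T \<le> G" using Cons.prems G by simp
  have "w = take G w @ drop G w" by simp
  then obtain z2 where p2: "lpath E v (take G w) z2" "lpath E z2 (drop G w) y"
    using lpath_split Cons.prems(1) by metis
  have "take G w = take (j*T) w @ drop (j*T) (take G w)" using jG
    by (metis append_take_drop_id min_absorb1 take_take)
  then obtain z1 where p1: "lpath E v (take (j*T) w) z1" "lpath E z1 (drop (j*T) (take G w)) z2"
    using lpath_split p2(1) by metis
  have w1: "walk E v (take (j*T) w) = z1" using walk_eq[OF det p1(1)] .
  have w2: "walk E v (take G w) = z2" using walk_eq[OF det p2(1)] .
  have z1X: "z1 \<in> X" using lpath_in_X[OF p1(1) EX Cons.prems(2)] .
  have z2X: "z2 \<in> X" using lpath_in_X[OF p2(1) EX Cons.prems(2)] .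
  have r: "lpath E z2 (ins E d T G z2 js (drop G w)) y"
    using Cons.prems z2X p2(2) by (intro Cons.IH) auto
  have "lpath E z1 (d z1) z1" using dp z1X by blast
  then have "lpath E v (take (j*T) w @ d z1 @ drop (j*T) (take G w) @ ins E d T G z2 js (drop G w)) y"
    using p1 r by (meson lpath_append)
  then show ?case using w1 w2 by simp
qed



lemma finite_lang_len:
  assumes "E \<subseteq> X \<times> S \<times> X" "finite S"
  shows "finite {w \<in> lang E x y. length w = j}"
proof (rule finite_subset[OF _ finite_lists_length_eq[OF assms(2), of j]])
  show "{w \<in> lang E x y. length w = j} \<subseteq> {xs. set xs \<subseteq> S \<and> length xs = j}"
    using lpath_set[OF _ assms(1)] unfolding lang_def by blast
qed

lemma count_bound:
  assumes fS: "finite S" and EX: "E \<subseteq> X \<times> S \<times> X" and det: "deterministic E"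
    and dp: "\<forall>u\<in>X. lpath E u (d u) u" and dF: "\<forall>u. \<exists>f\<in>F. sublist f (d u)"
    and dlen: "\<forall>u. length (d u) \<le> T" and d1: "\<forall>u. 1 \<le> length (d u)" and G: "G = M*T"
    and xX: "x \<in> X" and Gpos: "0 < G"
  shows "real (count_len (avoiding (lang E x y) F) n) * real M ^ (n div G)
     \<le> (\<Sum>j\<in>{n + n div G .. n + T*(n div G)}. real (count_len (lang E x y) j))"
proof -
  define i where "i = n div G"
  define A where "A = {w \<in> avoiding (lang E x y) F. length w = n}"
  define Ls where "Ls = {js. set js \<subseteq> {..<M} \<and> length js = i}"
  define \<phi> where "\<phi> = (\<lambda>(w, js). ins E d T G x js w)"
  define B where "B = (\<Union>j\<in>{n+i..n+T*i}. {u \<in> lang E x y. length u = j})"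
  have Gi: "G * i \<le> n" unfolding i_def using div_mult_mod_eq[of n G] by (metis le_add1 mult.commute)
  have inj: "inj_on \<phi> (A \<times> Ls)"
  proof (rule inj_onI)
    fix p q assume p: "p \<in> A \<times> Ls" and q: "q \<in> A \<times> Ls" and e: "\<phi> p = \<phi> q"
    obtain w js where pw: "p = (w, js)" by (cases p)
    obtain w' js' where qw: "q = (w', js')" by (cases q)
    have "js = js' \<and> w = w'"
      using ins_inj[OF dF dlen G, of E x js w js' w'] e p q Gi
      unfolding pw qw \<phi>_def A_def Ls_def avoiding_def by auto
    then show "p = q" using pw qw by simp
  qed
  have sub: "\<phi> ` (A \<times> Ls) \<subseteq> B"
  proof
    fix u assume "u \<in> \<phi> ` (A \<times> Ls)"
    then obtain w js where w: "w \<in> A" "js \<in> Ls" "u = ins E d T G x js w"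
      unfolding \<phi>_def by auto
    have pw: "lpath E x w y" using w(1) unfolding A_def avoiding_def lang_def by auto
    have lw: "length w = n" using w(1) unfolding A_def by auto
    have "lpath E x u y" using ins_path[OF det EX dp G pw xX] w(2,3) Gi lw unfolding Ls_def by auto
    moreover have "n + i \<le> length u \<and> length u \<le> n + T*i"
      using ins_length[OF dlen d1 G, of js w E x] w(2,3) Gi lw unfolding Ls_def by auto
    ultimately show "u \<in> B" unfolding B_def lang_def by auto
  qed
  have finB: "finite B" unfolding B_def using finite_lang_len[OF EX fS] by auto
  have finA: "finite A" unfolding A_def avoiding_def
    by (rule finite_subset[OF _ finite_lang_len[OF EX fS, of x y n]]) auto
  have cardL: "card Ls = M ^ i" unfolding Ls_def using card_lists_length_eq[of "{..<M}" i] by simp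
  have "card A * M ^ i = card (\<phi> ` (A \<times> Ls))"
    using card_image[OF inj] cardL by (simp add: card_cartesian_product)
  also have "\<dots> \<le> card B" using card_mono[OF finB sub] .
  also have "\<dots> \<le> (\<Sum>j\<in>{n+i..n+T*i}. card {u \<in> lang E x y. length u = j})"
    unfolding B_def by (rule card_UN_le) simp
  finally have "card A * M ^ i \<le> (\<Sum>j\<in>{n+i..n+T*i}. count_len (lang E x y) j)"
    unfolding count_len_def .
  then have "real (card A * M ^ i) \<le> real (\<Sum>j\<in>{n+i..n+T*i}. count_len (lang E x y) j)"
    by linarith
  then show ?thesis unfolding A_def i_def count_len_def by simp
qed



definition eterm :: "(nat \<Rightarrow> nat) \<Rightarrow> nat \<Rightarrow> ereal" where
  "eterm f n = (if f n = 0 then -\<infinity> else ereal (ln (real (f n)) / real n))"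

lemma entropy_eterm: "entropy L = limsup (eterm (count_len L))"
  unfolding entropy_def eterm_def by simp

lemma gap:
  fixes a c :: "nat \<Rightarrow> nat" and r :: real
  assumes r0: "0 \<le> r" and lc: "limsup (eterm c) \<le> ereal r" and T1: "1 \<le> T"
    and M: "ln (real M) \<ge> (r+1)*T + 1" and G: "G = M*T" and Gpos: "0 < G"
    and bd: "\<And>n. real (a n) * real M ^ (n div G) \<le> (\<Sum>j\<in>{n + n div G .. n + T*(n div G)}. real (c j))"
  shows "limsup (eterm a) \<le> ereal (r - 1/(2*G))"
proof -
  define \<delta> where "\<delta> = 1/(2*real G)"
  have \<delta>pos: "0 < \<delta>" "\<delta> \<le> 1" using Gpos unfolding \<delta>_def by (auto simp: field_simps)
  have Mpos: "0 < real M" using G Gpos by (cases M) auto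
  have "limsup (eterm c) < ereal (r + \<delta>)" 
  proof -
    have "ereal r < ereal (r + \<delta>)" using \<delta>pos by simp
    then show ?thesis using lc by (rule le_less_trans[rotated])
  qed
  then have "eventually (\<lambda>j. eterm c j < ereal (r+\<delta>)) sequentially" by (rule Limsup_lessD)
  then obtain N0 where N0: "\<And>j. j \<ge> N0 \<Longrightarrow> eterm c j < ereal (r+\<delta>)"
    unfolding eventually_sequentially by blast
  have cb: "real (c j) \<le> exp ((r+\<delta>) * j)" if "j \<ge> max N0 1" for j
  proof (cases "c j = 0")
    case True then show ?thesis by simp
  next
    case False
    have jp: "0 < real j" using that by simp
    from N0[of j] that False have "ln (real (c j)) / real j < r + \<delta>" unfolding eterm_def by simp
    then have "ln (real (c j)) < (r+\<delta>) * j" using jp by (simp add: divide_less_eq)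
    then have "exp (ln (real (c j))) < exp ((r+\<delta>) * j)" by simp
    then show ?thesis using False by simp
  qed
  define B where "B = (\<lambda>n::nat. r - \<delta> + (ln (real T + 1) + 1 + ln (real n)) / real n)"
  have ev: "eventually (\<lambda>n. eterm a n \<le> ereal (B n)) sequentially"
    unfolding eventually_sequentially
  proof (intro exI allI impI)
    fix n assume n: "max N0 1 \<le> n"
    define i where "i = n div G"
    have np: "0 < real n" "1 \<le> real n" using n by auto
    have sumb: "(\<Sum>j\<in>{n + i .. n + T*i}. real (c j)) \<le> (\<Sum>j\<in>{n + i .. n + T*i}. exp ((r+\<delta>) * (n + T*i)))"
    proof (rule sum_mono)
      fix j assume j: "j \<in> {n + i .. n + T*i}"
      have "real (c j) \<le> exp ((r+\<delta>) * j)" using cb j n by auto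
      also have "\<dots> \<le> exp ((r+\<delta>) * (n + T*i))"
      proof -
        have "real j \<le> real (n + T*i)" using j by (metis atLeastAtMost_iff of_nat_le_iff)
        then have "real j \<le> real n + real T * real i" by simp
        then show ?thesis using r0 \<delta>pos by (intro exp_mono mult_left_mono) auto
      qed
      finally show "real (c j) \<le> exp ((r+\<delta>) * (n + T*i))" .
    qed
    have cardI: "real (card {n + i .. n + T*i}) \<le> real T * n + 1"
    proof -
      have "i \<le> n" unfolding i_def by simp
      then have "T*i \<le> T*n" by simp
      moreover have "card {n + i .. n + T*i} = Suc (n + T*i) - (n + i)" by simp
      ultimately have "card {n + i .. n + T*i} \<le> T*n + 1" by linarith
      then have "real (card {n + i .. n + T*i}) \<le> real (T*n + 1)" by (simp only: of_nat_le_iff)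
      then show ?thesis by simp
    qed
    have main: "real (a n) * real M ^ i \<le> (real T * n + 1) * exp ((r+\<delta>) * (n + T*i))"
    proof -
      have "real (a n) * real M ^ i \<le> (\<Sum>j\<in>{n + i .. n + T*i}. real (c j))"
        using bd[of n] unfolding i_def .
      also have "\<dots> \<le> (\<Sum>j\<in>{n + i .. n + T*i}. exp ((r+\<delta>) * (n + T*i)))" by (rule sumb)
      also have "\<dots> = real (card {n + i .. n + T*i}) * exp ((r+\<delta>) * (n + T*i))" by simp
      also have "\<dots> \<le> (real T * n + 1) * exp ((r+\<delta>) * (n + T*i))"
        using cardI by (intro mult_right_mono) auto
      finally show ?thesis .
    qed
    show "eterm a n \<le> ereal (B n)"
    proof (cases "a n = 0")
      case True then show ?thesis unfolding eterm_def by simp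
    next
      case False
      have ap: "0 < real (a n)" using False by simp
      have "ln (real (a n) * real M ^ i) \<le> ln ((real T * n + 1) * exp ((r+\<delta>) * (n + T*i)))"
      proof (subst ln_le_cancel_iff)
        show "0 < real (a n) * real M ^ i" using ap Mpos by simp
        show "0 < (real T * n + 1) * exp ((r+\<delta>) * (n + T*i))"
          by (intro mult_pos_pos) (auto simp: add_nonneg_pos)
      qed (rule main)
      note that_ln = this
      then have L1: "ln (real (a n)) + i * ln (real M) \<le> ln (real T * n + 1) + (r+\<delta>) * (n + T*i)"
      proof -
        have "0 \<le> real T * n" by simp
        then have pT: "real T * n + 1 \<noteq> 0" by linarith
        show ?thesis using that_ln ap Mpos pT by (simp add: ln_mult ln_realpow)
      qed
      have L2: "(r+\<delta>) * (T*i) \<le> i * (ln (real M) - 1)"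
      proof -
        have "(r+\<delta>) * (T*i) \<le> (r+1) * (T*i)" using \<delta>pos by (intro mult_right_mono) auto
        also have "\<dots> = i * ((r+1)*T)" by simp
        also have "\<dots> \<le> i * (ln (real M) - 1)" using M by (intro mult_left_mono) auto
        finally show ?thesis .
      qed
      have L3: "real i \<ge> real n / real G - 1"
      proof -
        have "n < (i+1) * G" unfolding i_def using Gpos
          by (metis add.commute div_mult_mod_eq mod_less_divisor mult.commute mult_Suc_right nat_add_left_cancel_less plus_1_eq_Suc)
        then have "real n < (real i + 1) * real G" by (metis of_nat_1 of_nat_add of_nat_less_iff of_nat_mult)
        then show ?thesis using Gpos by (simp add: field_simps)
      qed
      have L4: "ln (real T * n + 1) \<le> ln (real T + 1) + ln (real n)"
      proof -
        have "real T * n + 1 \<le> (real T + 1) * n" using np by (simp add: algebra_simps)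
        moreover have "0 < real T * n + 1" using np by (simp add: add_nonneg_pos)
        ultimately have "ln (real T * n + 1) \<le> ln ((real T + 1) * n)" by (rule ln_mono)
        also have "\<dots> = ln (real T + 1) + ln (real n)" using np by (simp add: ln_mult)
        finally show ?thesis .
      qed
      have "ln (real (a n)) \<le> ln (real T + 1) + ln (real n) + (r+\<delta>) * n - i"
        using L1 L2 L4 by (simp add: algebra_simps)
      also have "\<dots> \<le> ln (real T + 1) + ln (real n) + (r+\<delta>) * n - (real n / real G - 1)"
        using L3 by simp
      also have "\<dots> = (B n) * n"
        unfolding B_def \<delta>_def using np Gpos by (simp add: field_simps)
      finally have "ln (real (a n)) / n \<le> B n" using np by (simp add: divide_le_eq)
      then show ?thesis using False unfolding eterm_def by simp
    qed
  qed
  have lim: "((\<lambda>n. ereal (B n)) \<longlongrightarrow> ereal (r - \<delta>)) sequentially"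
  proof -
    have "((\<lambda>n::nat. (ln (real T + 1) + 1 + ln (real n)) / real n) \<longlongrightarrow> 0) sequentially"
      by real_asymp
    then have "((\<lambda>n. B n) \<longlongrightarrow> r - \<delta> + 0) sequentially" unfolding B_def
      by (intro tendsto_add tendsto_const)
    then show ?thesis by (simp add: tendsto_ereal)
  qed
  have "limsup (eterm a) \<le> limsup (\<lambda>n. ereal (B n))" using Limsup_mono[OF ev] .
  also have "\<dots> = ereal (r - \<delta>)" using lim_imp_Limsup[OF _ lim] by simp
  finally show ?thesis unfolding \<delta>_def .
qed



lemma lpath_pow: "lpath E y c y \<Longrightarrow> lpath E y (concat (replicate k c)) y"
  by (induction k) (auto intro: lpath.intros lpath_append)

theorem mainTheorem13:
  fixes X :: "'v set" and E :: "('v \<times> 'a \<times> 'v) set"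
    and Sigma :: "'a set" and F :: "'a list set"
  assumes "finite Sigma"
    and "E \<subseteq> X \<times> Sigma \<times> X"
    and "X \<noteq> {}"
    and "uniformly_connected X E"
    and "deterministic E"
    and "finite F" and "F \<noteq> {}"
    and "\<forall>w\<in>F. w \<noteq> [] \<and> set w \<subseteq> Sigma"
    and "relatively_dense X E F"
  shows "(SUP p \<in> X \<times> X. entropy (avoiding (lang E (fst p) (snd p)) F)) < graph_entropy X E"
proof -
  note fS = assms(1) and EX = assms(2) and det = assms(5)
  obtain K where K: "\<forall>x a y. (x, a, y) \<in> E \<longrightarrow> (\<exists>w. length w \<le> K \<and> lpath E y w x)"
    using assms(4) unfolding uniformly_connected_def by blast
  obtain D where D: "\<forall>x\<in>X. \<exists>y\<in>X. \<exists>w\<in>F. fwd_dist E x y \<le> enat D \<and> (\<exists>z. lpath E y w z)"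
    using assms(9) unfolding relatively_dense_def by blast
  define m where "m = Max (length ` F)"
  have mF: "\<And>f. f \<in> F \<Longrightarrow> length f \<le> m" unfolding m_def using assms(6) by simp
  define R where "R = (D + m) * (K + 1)"
  have mR: "m \<le> R"
  proof -
    have "m \<le> D + m" by simp
    also have "\<dots> \<le> (D + m) * (K + 1)" by simp
    finally show ?thesis unfolding R_def .
  qed
  have fne: "\<And>f. f \<in> F \<Longrightarrow> 1 \<le> length f" using assms(8) by (simp add: Suc_le_eq)
  define P where "P = (\<lambda>u dd. (\<exists>f\<in>F. sublist f dd) \<and> length dd \<le> R \<and> 1 \<le> length dd \<and> (u \<in> X \<longrightarrow> lpath E u dd u))"
  have Pex: "\<exists>dd. P u dd" for u
  proof (cases "u \<in> X")
    case True
    from D True obtain y f z where y: "y \<in> X" "f \<in> F" "fwd_dist E u y \<le> enat D" "lpath E y f z" by blast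
    obtain p where p: "lpath E u p y" "length p \<le> D" using fwd_dist_path[OF y(3)] by blast
    have pf: "lpath E u (p @ f) z" using lpath_append p(1) y(4) by metis
    obtain q where q: "lpath E z q u" "length q \<le> K * length (p @ f)" using lpath_back[OF K pf] by blast
    have "lpath E u ((p @ f) @ q) u" using lpath_append pf q(1) by metis
    moreover have "sublist f ((p @ f) @ q)" by (metis sublist_appendI append.assoc)
    moreover have "length ((p @ f) @ q) \<le> R"
    proof -
      have lpf: "length (p @ f) \<le> D + m" using p(2) mF[OF y(2)] by simp
      have "length ((p @ f) @ q) \<le> length (p @ f) * (K + 1)" using q(2) by (simp add: algebra_simps)
      also have "\<dots> \<le> (D + m) * (K + 1)" using lpf by (rule mult_right_mono) simp
      finally show ?thesis unfolding R_def .
    qed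
    moreover have "1 \<le> length ((p @ f) @ q)" using fne[OF y(2)] by simp
    ultimately show ?thesis unfolding P_def using y(2) by blast
  next
    case False
    obtain f where f: "f \<in> F" using assms(7) by blast
    then have "P u f" unfolding P_def using False mF[OF f] mR fne[OF f] by auto
    then show ?thesis by blast
  qed
  define d where "d = (\<lambda>u. SOME dd. P u dd)"
  have dP: "P u (d u)" for u unfolding d_def using Pex by (rule someI_ex)
  have dp: "\<forall>u\<in>X. lpath E u (d u) u" and dF: "\<forall>u. \<exists>f\<in>F. sublist f (d u)"
    and dlen: "\<forall>u. length (d u) \<le> R" and d1: "\<forall>u. 1 \<le> length (d u)"
    using dP unfolding P_def by auto
  have R1: "1 \<le> R" using d1 dlen by (meson order_trans)
  obtain x0 where x0: "x0 \<in> X" using assms(3) by blast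
  from D x0 obtain y f z where y: "y \<in> X" "f \<in> F" "lpath E y f z" by blast
  obtain a f' where af: "f = a # f'" using assms(8) y(2) by (cases f) auto
  obtain z1 where z1: "(y, a, z1) \<in> E" using y(3) af by (auto elim: lpath.cases)
  obtain q where q: "lpath E z1 q y" using K z1 by blast
  define cyc where "cyc = a # q"
  have cyc: "lpath E y cyc y" unfolding cyc_def using z1 q by (rule lpath.intros)
  have aS: "a \<in> Sigma" using z1 EX by auto
  have cS: "1 \<le> card Sigma" using aS fS by (metis One_nat_def Suc_leI card_gt_0_iff empty_iff)
  have ub: "entropy (lang E x w) \<le> ereal (ln (card Sigma))" for x w
    unfolding entropy_eterm
  proof (rule Limsup_bounded, rule always_eventually, rule allI)
    fix n
    show "eterm (count_len (lang E x w)) n \<le> ereal (ln (card Sigma))"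
    proof (cases "count_len (lang E x w) n = 0")
      case True then show ?thesis unfolding eterm_def by simp
    next
      case False
      have "count_len (lang E x w) n \<le> card {xs. set xs \<subseteq> Sigma \<and> length xs = n}"
        unfolding count_len_def
        by (rule card_mono[OF finite_lists_length_eq[OF fS]]) (use lpath_set[OF _ EX] in \<open>auto simp: lang_def\<close>)
      then have cb: "count_len (lang E x w) n \<le> card Sigma ^ n" by (simp add: card_lists_length_eq[OF fS])
      have lnS: "0 \<le> ln (real (card Sigma))" using cS by simp
      show ?thesis
      proof (cases "n = 0")
        case True then show ?thesis using False lnS unfolding eterm_def by simp
      next
        case n0: False
        have "real (count_len (lang E x w) n) \<le> real (card Sigma) ^ n" using cb
          by (metis of_nat_le_iff of_nat_power)
        then have "ln (real (count_len (lang E x w) n)) \<le> ln (real (card Sigma) ^ n)"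
          using False by (intro ln_mono) auto
        also have "\<dots> = n * ln (real (card Sigma))" using cS by (simp add: ln_realpow)
        finally show ?thesis using False n0 unfolding eterm_def by (simp add: divide_le_eq mult.commute)
      qed
    qed
  qed
  have lb: "0 \<le> entropy (lang E y y)"
  proof (rule ccontr)
    assume "\<not> 0 \<le> entropy (lang E y y)"
    then have "entropy (lang E y y) < ereal 0" by (simp add: zero_ereal_def)
    then have "eventually (\<lambda>n. eterm (count_len (lang E y y)) n < ereal 0) sequentially"
      unfolding entropy_eterm by (rule Limsup_lessD)
    then obtain N where N: "\<And>n. n \<ge> N \<Longrightarrow> eterm (count_len (lang E y y)) n < ereal 0"
      unfolding eventually_sequentially by blast
    define n where "n = length (concat (replicate (Suc N) cyc))"
    have nN: "n \<ge> N" unfolding n_def cyc_def by (simp add: length_concat sum_list_replicate)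
    have "concat (replicate (Suc N) cyc) \<in> {w \<in> lang E y y. length w = n}"
      unfolding n_def lang_def using lpath_pow[OF cyc, of "Suc N"] by (simp only: mem_Collect_eq)
    then have "{w \<in> lang E y y. length w = n} \<noteq> {}" by blast
    then have c1: "1 \<le> count_len (lang E y y) n"
      unfolding count_len_def using finite_lang_len[OF EX fS, of y y n]
      by (simp add: Suc_le_eq card_gt_0_iff)
    have "1 \<le> real (count_len (lang E y y) n)" using c1 by linarith
    then have "0 \<le> ln (real (count_len (lang E y y) n))" by simp
    then have "0 \<le> ln (real (count_len (lang E y y) n)) / real n" by simp
    moreover have "eterm (count_len (lang E y y)) n = ereal (ln (real (count_len (lang E y y) n)) / real n)"
      using c1 unfolding eterm_def by simp
    ultimately have "\<not> eterm (count_len (lang E y y)) n < ereal 0" by (simp only: ereal_less not_less ereal_less_eq)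
    with N[OF nN] show False by blast
  qed
  have ge0: "0 \<le> graph_entropy X E" unfolding graph_entropy_def
    using lb y(1) by (intro SUP_upper2[of "(y,y)"]) auto
  have gle: "graph_entropy X E \<le> ereal (ln (card Sigma))" unfolding graph_entropy_def
    using ub by (intro SUP_least) auto
  define r where "r = real_of_ereal (graph_entropy X E)"
  have rE: "graph_entropy X E = ereal r"
  proof -
    have "\<bar>graph_entropy X E\<bar> \<noteq> \<infinity>"
      using ge0 gle by (cases "graph_entropy X E") auto
    then show ?thesis unfolding r_def by (simp add: ereal_real)
  qed
  have r0: "0 \<le> r" using ge0 rE by (simp add: zero_ereal_def)
  define M where "M = nat \<lceil>exp ((r+1)*R + 1)\<rceil>"
  have Mge: "exp ((r+1)*R + 1) \<le> real M" unfolding M_def by linarith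
  have M: "ln (real M) \<ge> (r+1)*R + 1"
  proof -
    have "(r+1)*R + 1 = ln (exp ((r+1)*R + 1))" by simp
    also have "\<dots> \<le> ln (real M)" using Mge by (intro ln_mono) auto
    finally show ?thesis .
  qed
  have "0 < real M" using Mge exp_gt_zero[of "(r+1)*R + 1"] by linarith
  then have Mpos: "0 < M" by simp
  define G where "G = M * R"
  have Gpos: "0 < G" unfolding G_def using Mpos R1 by simp
  have each: "entropy (avoiding (lang E (fst p) (snd p)) F) \<le> ereal (r - 1/(2*G))" if p: "p \<in> X \<times> X" for p
  proof -
    obtain x w where xw: "p = (x, w)" by (cases p)
    have xX: "x \<in> X" using p xw by auto
    have lc: "limsup (eterm (count_len (lang E x w))) \<le> ereal r"
    proof -
      have "entropy (lang E (fst p) (snd p)) \<le> graph_entropy X E"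
        unfolding graph_entropy_def using p by (rule SUP_upper)
      then show ?thesis using xw rE unfolding entropy_eterm by simp
    qed
    have "limsup (eterm (count_len (avoiding (lang E x w) F))) \<le> ereal (r - 1/(2*G))"
      using gap[OF r0 lc R1 M G_def Gpos count_bound[OF fS EX det dp dF dlen d1 G_def xX Gpos]] by simp
    then show ?thesis using xw unfolding entropy_eterm by simp
  qed
  have "(SUP p \<in> X \<times> X. entropy (avoiding (lang E (fst p) (snd p)) F)) \<le> ereal (r - 1/(2*G))"
    using each by (intro SUP_least) auto
  also have "\<dots> < ereal r" using Gpos by simp
  finally show ?thesis using rE by simp
qed

end
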